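(* Let $E$ be a Banach lattice with an order continuous norm, let $\mathfrak{B}$ be a Boolean subalgebra of $\mathfrak{B}(E)$, and let $S\colon\mathfrak{B}\to\mathfrak{B}$ be a sectionally open transformation with $S(\mathbf 0)=\mathbf 0$. If $\xi$ is a forward filtration in $\mathfrak{B}$, then $n\mapsto S(\xi_n)$, $n\in\{0,1,\dots,\infty\}$, is a forward filtration in $\mathfrak{B}$. In particular, the semigroup of sectionally open transformations fixing $\mathbf 0$ acts on the set of forward filtrations in $\mathfrak{B}$ by coordinatewise evaluation.
   Context: $\mathfrak{B}(E)$ is the Boolean algebra of all order projections on $E$ ($\pi\le\rho$ iff $\pi\rho=\pi$, zero $\mathbf 0$, unit $\mathbf 1=I_E$). For $\pi\in\mathfrak{B}$ let $\mathrm{Sc}(\pi)=\{\pi'\in\mathfrak{B}:\pi\le\pi'\}$; a map $S\colon\mathfrak{B}\to\mathfrak{B}$ is sectionally open if $S(\mathrm{Sc}(\pi))=\mathrm{Sc}(S(\pi))$ for all $\pi\in\mathfrak{B}$. A forward filtration in $\mathfrak{B}$ is a map $\xi\colon\{0,1,\dots,\infty\}\to\mathfrak{B}$ with $\xi_n\le\xi_{n+1}$ for all $n\ge0$, $\xi_0=\mathbf 0$, $\xi_\infty=\mathbf 1$. *)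

theory Defs
  imports "HOL-Analysis.Analysis" "HOL-Library.Extended_Nat"
begin

definition lat_abs :: "'a::{ordered_real_vector, lattice} \<Rightarrow> 'a" where
  "lat_abs x = sup x (- x)"

definition banach_lattice :: "'a::{banach, ordered_real_vector, lattice} itself \<Rightarrow> bool" where
  "banach_lattice _ \<longleftrightarrow> (\<forall>x y :: 'a. lat_abs x \<le> lat_abs y \<longrightarrow> norm x \<le> norm y)"

definition order_continuous_norm :: "'a::{banach, ordered_real_vector, lattice} itself \<Rightarrow> bool" where
  "order_continuous_norm _ \<longleftrightarrow>
     (\<forall>D :: 'a set. D \<noteq> {} \<and> (\<forall>x\<in>D. 0 \<le> x)
        \<and> (\<forall>x\<in>D. \<forall>y\<in>D. \<exists>z\<in>D. z \<le> x \<and> z \<le> y)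
        \<and> (\<forall>l. (\<forall>x\<in>D. l \<le> x) \<longrightarrow> l \<le> 0)
        \<longrightarrow> (INF x\<in>D. norm x) = 0)"

definition order_projections :: "('a::{ordered_real_vector, lattice} \<Rightarrow> 'a) set" where
  "order_projections = {P. linear P \<and> P \<circ> P = P \<and> (\<forall>x. 0 \<le> x \<longrightarrow> 0 \<le> P x \<and> P x \<le> x)}"

definition proj_le :: "('a \<Rightarrow> 'a) \<Rightarrow> ('a \<Rightarrow> 'a) \<Rightarrow> bool" where
  "proj_le \<pi> \<rho> \<longleftrightarrow> \<pi> \<circ> \<rho> = \<pi>"

definition proj_zero :: "'a::zero \<Rightarrow> 'a" where
  "proj_zero = (\<lambda>x. 0)"

text \<open>Boolean subalgebra of the Boolean algebra of order projections: contains 0 and I and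
is closed under meet (\<pi>\<rho>), join (\<pi>+\<rho>-\<pi>\<rho>) and complement (I-\<pi>).\<close>

definition boolean_subalgebra :: "('a::{ordered_real_vector, lattice} \<Rightarrow> 'a) set \<Rightarrow> bool" where
  "boolean_subalgebra B \<longleftrightarrow> B \<subseteq> order_projections \<and> proj_zero \<in> B \<and> id \<in> B
     \<and> (\<forall>\<pi>\<in>B. \<forall>\<rho>\<in>B. \<pi> \<circ> \<rho> \<in> B)
     \<and> (\<forall>\<pi>\<in>B. \<forall>\<rho>\<in>B. (\<lambda>x. \<pi> x + \<rho> x - \<pi> (\<rho> x)) \<in> B)
     \<and> (\<forall>\<pi>\<in>B. (\<lambda>x. x - \<pi> x) \<in> B)"

definition Sc :: "('a \<Rightarrow> 'a) set \<Rightarrow> ('a \<Rightarrow> 'a) \<Rightarrow> ('a \<Rightarrow> 'a) set" where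
  "Sc B \<pi> = {\<pi>' \<in> B. proj_le \<pi> \<pi>'}"

definition sectionally_open :: "('a \<Rightarrow> 'a) set \<Rightarrow> (('a \<Rightarrow> 'a) \<Rightarrow> ('a \<Rightarrow> 'a)) \<Rightarrow> bool" where
  "sectionally_open B S \<longleftrightarrow> S ` B \<subseteq> B \<and> (\<forall>\<pi>\<in>B. S ` Sc B \<pi> = Sc B (S \<pi>))"

definition forward_filtration :: "('a::zero \<Rightarrow> 'a) set \<Rightarrow> (enat \<Rightarrow> ('a \<Rightarrow> 'a)) \<Rightarrow> bool" where
  "forward_filtration B \<xi> \<longleftrightarrow> (\<forall>n. \<xi> n \<in> B)
     \<and> (\<forall>n::nat. proj_le (\<xi> (enat n)) (\<xi> (enat (Suc n))))
     \<and> \<xi> 0 = proj_zero \<and> \<xi> \<infinity> = id"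

end

theory Submission
  imports Defs
begin

theorem proposition3p18:
  fixes B :: "('a::{banach, ordered_real_vector, lattice} \<Rightarrow> 'a) set"
    and S :: "('a \<Rightarrow> 'a) \<Rightarrow> ('a \<Rightarrow> 'a)"
    and \<xi> :: "enat \<Rightarrow> ('a \<Rightarrow> 'a)"
  assumes "banach_lattice TYPE('a)"
    and "order_continuous_norm TYPE('a)"
    and "boolean_subalgebra B"
    and "sectionally_open B S"
    and "S proj_zero = proj_zero"
    and "forward_filtration B \<xi>"
  shows "forward_filtration B (\<lambda>n. S (\<xi> n))"
proof -
  have SB: "S ` B \<subseteq> B" and SO: "\<And>\<pi>. \<pi> \<in> B \<Longrightarrow> S ` Sc B \<pi> = Sc B (S \<pi>)"
    using assms(4) unfolding sectionally_open_def by auto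
  have idB: "id \<in> B" using assms(3) unfolding boolean_subalgebra_def by auto
  have xB: "\<And>n. \<xi> n \<in> B" and xm: "\<And>n::nat. proj_le (\<xi> (enat n)) (\<xi> (enat (Suc n)))"
    and x0: "\<xi> 0 = proj_zero" and xi: "\<xi> \<infinity> = id"
    using assms(6) unfolding forward_filtration_def by auto
  have "Sc B id = {id}" using idB unfolding Sc_def proj_le_def by auto
  hence "{S id} = Sc B (S id)" using SO[OF idB] by simp
  moreover have "id \<in> Sc B (S id)" using idB unfolding Sc_def proj_le_def by auto
  ultimately have Sid: "S id = id" by (metis singletonD)
  have mono: "proj_le (S (\<xi> (enat n))) (S (\<xi> (enat (Suc n))))" for n
  proof -
    have "\<xi> (enat (Suc n)) \<in> Sc B (\<xi> (enat n))" using xB xm unfolding Sc_def by auto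
    hence "S (\<xi> (enat (Suc n))) \<in> Sc B (S (\<xi> (enat n)))" using SO[OF xB] by blast
    thus ?thesis unfolding Sc_def by auto
  qed
  show ?thesis unfolding forward_filtration_def
    using SB xB mono x0 xi Sid assms(5) by auto
qed

end
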